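(* Let $\mathcal{H}=\bigotimes_{a=1}^N\mathcal{H}_a$ be finite-dimensional, $\mathcal{N}=\{\mathcal{N}_k\}$ a non-trivial neighborhood structure, and $\Phi_{\mathcal{N}}$ the quasi-local projector defined below. For any $\rho,\sigma\in\mathcal{D}(\mathcal{H})$, one has $\rho_{\mathcal{N}_k}=\sigma_{\mathcal{N}_k}$ for all $\mathcal{N}_k\in\mathcal{N}$ if and only if $\Phi_{\mathcal{N}}(\sigma)=\Phi_{\mathcal{N}}(\rho)$.
   Context: $\mathcal{D}(\mathcal{H})$ is the set of density operators; $\mathcal{B}(\mathcal{H})$ the space of linear operators. A neighborhood is $\mathcal{N}_k\subsetneq\{1,\dots,N\}$ with complement $\overline{\mathcal{N}}_k$; a neighborhood structure is a finite collection of neighborhoods, non-trivial if every index lies in some neighborhood and each neighborhood intersects another. $\rho_{\mathcal{N}_k}=\mathrm{tr}_{\overline{\mathcal{N}}_k}\rho$. For each $a$ fix an orthonormal (Hilbert–Schmidt) basis of Hermitian operators on $\mathcal{H}_a$ consisting of the (normalized) identity $I_a$ and traceless Hermitian operators $X^a_{i_a}$, $i_a=1,\dots,d_a^2-1$; let $\mathcal{X}$ be the orthonormal product basis of $\mathcal{B}(\mathcal{H})$ formed by all $N$-fold tensor products. For $X_i\in\mathcal{X}$ let $\Phi_{X_i}(M)=\mathrm{tr}(X_iM)X_i$. Let $\mathcal{X}_{\mathcal{N}_k}$ be the set of $X_i\in\mathcal{X}$ of the form $X^i_{\mathcal{N}_k}\otimes I_{\overline{\mathcal{N}}_k}$ (identity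 factors outside $\mathcal{N}_k$), $\mathcal{X}_{\mathcal{N}}=\bigcup_k\mathcal{X}_{\mathcal{N}_k}$, and $\Phi_{\mathcal{N}}=\sum_{X_i\in\mathcal{X}_{\mathcal{N}}}\Phi_{X_i}$. *)

theory Defs
  imports "HOL-Analysis.Analysis"
begin

text \<open>Subsystems are indexed by a < N (0-based). Subsystem a has dimension d a.
  A basis vector of H = tensor product of the H_a is a tuple x in basis_tuples N d.
  Operators on H are represented by their matrices (functions of two tuples).\<close>

type_synonym tuple = "nat \<Rightarrow> nat"
type_synonym op = "tuple \<Rightarrow> tuple \<Rightarrow> complex"

definition tuples_on :: "nat set \<Rightarrow> (nat \<Rightarrow> nat) \<Rightarrow> tuple set" where
  "tuples_on S d = PiE S (\<lambda>a. {..<d a})"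

definition basis_tuples :: "nat \<Rightarrow> (nat \<Rightarrow> nat) \<Rightarrow> tuple set" where
  "basis_tuples N d = tuples_on {..<N} d"

definition density_op :: "nat \<Rightarrow> (nat \<Rightarrow> nat) \<Rightarrow> op \<Rightarrow> bool" where
  "density_op N d \<rho> \<longleftrightarrow>
     (\<forall>v :: tuple \<Rightarrow> complex.
        (\<Sum>x\<in>basis_tuples N d. \<Sum>y\<in>basis_tuples N d. cnj (v x) * \<rho> x y * v y) \<in> \<real> \<and>
        Re (\<Sum>x\<in>basis_tuples N d. \<Sum>y\<in>basis_tuples N d. cnj (v x) * \<rho> x y * v y) \<ge> 0)
     \<and> (\<Sum>x\<in>basis_tuples N d. \<rho> x x) = 1"

definition merge_tuple :: "nat set \<Rightarrow> tuple \<Rightarrow> tuple \<Rightarrow> tuple" where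
  "merge_tuple K x z = (\<lambda>a. if a \<in> K then x a else z a)"

text \<open>Partial trace over the complement of K: the reduced operator rho_K on the
  tensor product of the H_a, a in K.\<close>
definition ptrace :: "nat \<Rightarrow> (nat \<Rightarrow> nat) \<Rightarrow> nat set \<Rightarrow> op \<Rightarrow> op" where
  "ptrace N d K \<rho> = (\<lambda>x y.
     if x \<in> tuples_on K d \<and> y \<in> tuples_on K d then
       (\<Sum>z\<in>tuples_on ({..<N} - K) d. \<rho> (merge_tuple K x z) (merge_tuple K y z))
     else 0)"

definition nontrivial_neighborhood_structure :: "nat \<Rightarrow> nat set set \<Rightarrow> bool" where
  "nontrivial_neighborhood_structure N NS \<longleftrightarrow>
     finite NS \<and> (\<forall>K\<in>NS. K \<subset> {..<N}) \<and>
     (\<forall>a<N. \<exists>K\<in>NS. a \<in> K) \<and>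
     (\<forall>K\<in>NS. \<exists>K'\<in>NS. K' \<noteq> K \<and> K \<inter> K' \<noteq> {})"

text \<open>B a j r c : the (r,c) matrix entry of the j-th element (j < d a ^ 2) of the
  local Hilbert--Schmidt orthonormal Hermitian basis on H_a; element 0 is the normalized
  identity, the others are traceless.\<close>
definition local_bases :: "nat \<Rightarrow> (nat \<Rightarrow> nat) \<Rightarrow> (nat \<Rightarrow> nat \<Rightarrow> nat \<Rightarrow> nat \<Rightarrow> complex) \<Rightarrow> bool" where
  "local_bases N d B \<longleftrightarrow> (\<forall>a<N.
     (\<forall>j<d a ^ 2. \<forall>r<d a. \<forall>c<d a. B a j r c = cnj (B a j c r)) \<and>
     (\<forall>j<d a ^ 2. \<forall>j'<d a ^ 2.
        (\<Sum>r<d a. \<Sum>c<d a. cnj (B a j r c) * B a j' r c) = (if j = j' then 1 else 0)) \<and>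
     (\<forall>r<d a. \<forall>c<d a. B a 0 r c = (if r = c then 1 / complex_of_real (sqrt (real (d a))) else 0)) \<and>
     (\<forall>j. 1 \<le> j \<and> j < d a ^ 2 \<longrightarrow> (\<Sum>r<d a. B a j r r) = 0))"

definition prod_basis :: "nat \<Rightarrow> (nat \<Rightarrow> nat) \<Rightarrow> (nat \<Rightarrow> nat \<Rightarrow> nat \<Rightarrow> nat \<Rightarrow> complex) \<Rightarrow> tuple \<Rightarrow> op" where
  "prod_basis N d B j = (\<lambda>x y.
     if x \<in> basis_tuples N d \<and> y \<in> basis_tuples N d
     then (\<Prod>a<N. B a (j a) (x a) (y a)) else 0)"

definition multi_indices :: "nat \<Rightarrow> (nat \<Rightarrow> nat) \<Rightarrow> tuple set" where
  "multi_indices N d = PiE {..<N} (\<lambda>a. {..<d a ^ 2})"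

text \<open>Multi-indices of elements of X_N: identity factor outside some neighborhood.\<close>
definition nbhd_indices :: "nat \<Rightarrow> (nat \<Rightarrow> nat) \<Rightarrow> nat set set \<Rightarrow> tuple set" where
  "nbhd_indices N d NS = {j \<in> multi_indices N d. \<exists>K\<in>NS. \<forall>a<N. a \<notin> K \<longrightarrow> j a = 0}"

definition op_trace :: "nat \<Rightarrow> (nat \<Rightarrow> nat) \<Rightarrow> op \<Rightarrow> complex" where
  "op_trace N d M = (\<Sum>x\<in>basis_tuples N d. M x x)"

definition op_mult :: "nat \<Rightarrow> (nat \<Rightarrow> nat) \<Rightarrow> op \<Rightarrow> op \<Rightarrow> op" where
  "op_mult N d A M = (\<lambda>x y. \<Sum>z\<in>basis_tuples N d. A x z * M z y)"

definition Phi_X :: "nat \<Rightarrow> (nat \<Rightarrow> nat) \<Rightarrow> op \<Rightarrow> op \<Rightarrow> op" where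
  "Phi_X N d X M = (\<lambda>x y. op_trace N d (op_mult N d X M) * X x y)"

definition Phi_N :: "nat \<Rightarrow> (nat \<Rightarrow> nat) \<Rightarrow> (nat \<Rightarrow> nat \<Rightarrow> nat \<Rightarrow> nat \<Rightarrow> complex) \<Rightarrow> nat set set \<Rightarrow> op \<Rightarrow> op" where
  "Phi_N N d B NS M = (\<lambda>x y. \<Sum>j\<in>nbhd_indices N d NS. Phi_X N d (prod_basis N d B j) M x y)"

end

theory Submission
  imports Defs "Jordan_Normal_Form.Determinant"
begin


lemma sum_divmod_aux:
  fixes g :: "nat \<Rightarrow> 'a::comm_monoid_add"
  shows "(\<Sum>k<a*n. g k) = (\<Sum>r<a. \<Sum>c<n. g (r*n+c))"
proof (induction a)
  case 0 then show ?case by simp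
next
  case (Suc a)
  have "(\<Sum>k<Suc a*n. g k) = (\<Sum>k<a*n. g k) + (\<Sum>k<n. g (a*n+k))"
  proof -
    have "(\<Sum>k<Suc a*n. g k) = sum g {0..<a*n+n}" by (simp add: lessThan_atLeast0 add.commute)
    also have "\<dots> = sum g {0..<a*n} + sum g {a*n..<a*n+n}"
      by (rule sum.atLeastLessThan_concat[symmetric]) auto
    also have "sum g {a*n..<a*n+n} = (\<Sum>k<n. g (a*n+k))"
      by (subst sum.atLeastLessThan_shift_0) (simp add: lessThan_atLeast0 add.commute)
    finally show ?thesis by (simp add: lessThan_atLeast0)
  qed
  then show ?case using Suc by simp
qed

lemma sum_divmod:
  fixes f :: "nat \<Rightarrow> nat \<Rightarrow> 'a::comm_monoid_add"
  shows "(\<Sum>k<n*n. f (k div n) (k mod n)) = (\<Sum>r<n. \<Sum>c<n. f r c)"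
proof -
  have "(\<Sum>k<n*n. f (k div n) (k mod n)) = (\<Sum>r<n. \<Sum>c<n. f ((r*n+c) div n) ((r*n+c) mod n))"
    by (rule sum_divmod_aux)
  also have "\<dots> = (\<Sum>r<n. \<Sum>c<n. f r c)"
    by (intro sum.cong refl) auto
  finally show ?thesis .
qed

lemma complete1:
  fixes Bj :: "nat \<Rightarrow> nat \<Rightarrow> nat \<Rightarrow> complex"
  assumes orth: "\<forall>j<n^2. \<forall>j'<n^2. (\<Sum>r<n. \<Sum>c<n. cnj (Bj j r c) * Bj j' r c) = (if j = j' then 1 else 0)"
    and rc: "r < n" "c < n" "r' < n" "c' < n"
  shows "(\<Sum>j<n^2. Bj j r' c' * cnj (Bj j r c)) = (if r = r' \<and> c = c' then 1 else 0)"
proof -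
  define m where "m = n*n"
  define A where "A = Matrix.mat m m (\<lambda>(j,k). cnj (Bj j (k div n) (k mod n)))"
  define C where "C = Matrix.mat m m (\<lambda>(k,j). Bj j (k div n) (k mod n))"
  have Ac: "A \<in> carrier_mat m m" and Cc: "C \<in> carrier_mat m m" by (auto simp: A_def C_def)
  have "A * C = 1\<^sub>m m"
  proof (rule eq_matI)
    fix i j assume ij: "i < dim_row (1\<^sub>m m)" "j < dim_col (1\<^sub>m m)"
    have "(A * C) $$ (i, j) = (\<Sum>k<m. cnj (Bj i (k div n) (k mod n)) * Bj j (k div n) (k mod n))"
      using ij by (simp add: A_def C_def scalar_prod_def lessThan_atLeast0)
    also have "\<dots> = (\<Sum>r<n. \<Sum>c<n. cnj (Bj i r c) * Bj j r c)"
      unfolding m_def by (rule sum_divmod)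
    also have "\<dots> = 1\<^sub>m m $$ (i, j)"
      using ij orth by (simp add: m_def power2_eq_square)
    finally show "(A * C) $$ (i, j) = 1\<^sub>m m $$ (i, j)" .
  qed (auto simp: A_def C_def)
  hence CA: "C * A = 1\<^sub>m m" using mat_mult_left_right_inverse[OF Ac Cc] by blast
  define k where "k = r'*n+c'"
  define k' where "k' = r*n+c"
  have lt: "x*n+y < n*n" if "x < n" "y < n" for x y
  proof -
    have "x*n+y < Suc x * n" using that by simp
    also have "\<dots> \<le> n*n" using that by (intro mult_le_mono1) simp
    finally show ?thesis .
  qed
  have kk: "k < m" "k' < m" using rc lt unfolding k_def k'_def m_def by auto
  have "(C * A) $$ (k, k') = (\<Sum>j<m. Bj j (k div n) (k mod n) * cnj (Bj j (k' div n) (k' mod n)))"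
    using kk by (simp add: A_def C_def scalar_prod_def lessThan_atLeast0)
  also have "\<dots> = (\<Sum>j<n^2. Bj j r' c' * cnj (Bj j r c))"
    using rc by (simp add: k_def k'_def m_def power2_eq_square)
  finally have "(\<Sum>j<n^2. Bj j r' c' * cnj (Bj j r c)) = (C * A) $$ (k, k')" by simp
  also have "\<dots> = (if k = k' then 1 else 0)" using CA kk by simp
  also have "(k = k') = (r = r' \<and> c = c')"
  proof
    assume "k = k'"
    hence "k div n = k' div n" "k mod n = k' mod n" by simp_all
    thus "r = r' \<and> c = c'" using rc unfolding k_def k'_def by simp
  qed (simp add: k_def k'_def)
  finally show ?thesis by simp
qed




lemma merge_in:
  assumes "K \<subseteq> {..<N}" "u \<in> tuples_on K d" "v \<in> tuples_on ({..<N}-K) d"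
  shows "merge_tuple K u v \<in> basis_tuples N d"
  using assms unfolding basis_tuples_def tuples_on_def merge_tuple_def
  by (auto simp: PiE_iff extensional_def)

lemma bij_merge:
  assumes "K \<subseteq> {..<N}"
  shows "bij_betw (\<lambda>(u,v). merge_tuple K u v) (tuples_on K d \<times> tuples_on ({..<N}-K) d) (basis_tuples N d)"
proof (rule bij_betwI[where g = "\<lambda>x. (restrict x K, restrict x ({..<N}-K))"])
  show "(\<lambda>(u,v). merge_tuple K u v) \<in> tuples_on K d \<times> tuples_on ({..<N}-K) d \<rightarrow> basis_tuples N d"
    using merge_in[OF assms] by auto
  show "(\<lambda>x. (restrict x K, restrict x ({..<N}-K))) \<in> basis_tuples N d \<rightarrow> tuples_on K d \<times> tuples_on ({..<N}-K) d"
    using assms unfolding basis_tuples_def tuples_on_def by (auto simp: PiE_iff)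
  show "(\<lambda>x. (restrict x K, restrict x ({..<N}-K))) ((\<lambda>(u,v). merge_tuple K u v) p) = p"
    if "p \<in> tuples_on K d \<times> tuples_on ({..<N}-K) d" for p
  proof (cases p)
    case (Pair u v)
    with that have u: "u \<in> extensional K" and v: "v \<in> extensional ({..<N}-K)"
      unfolding tuples_on_def by (auto simp: PiE_iff)
    have "restrict (merge_tuple K u v) K = u"
    proof
      fix a show "restrict (merge_tuple K u v) K a = u a"
        using u by (cases "a \<in> K") (auto simp: merge_tuple_def extensional_def)
    qed
    moreover have "restrict (merge_tuple K u v) ({..<N}-K) = v"
    proof
      fix a show "restrict (merge_tuple K u v) ({..<N}-K) a = v a"
        using v by (cases "a \<in> {..<N}-K") (auto simp: merge_tuple_def extensional_def)
    qed
    ultimately show ?thesis using Pair by simp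
  qed
  show "(\<lambda>(u,v). merge_tuple K u v) (restrict x K, restrict x ({..<N}-K)) = x"
    if "x \<in> basis_tuples N d" for x
  proof
    fix a
    have x: "x \<in> extensional {..<N}" using that unfolding basis_tuples_def tuples_on_def by (auto simp: PiE_iff)
    show "(\<lambda>(u,v). merge_tuple K u v) (restrict x K, restrict x ({..<N}-K)) a = x a"
      using x assms by (cases "a \<in> K"; cases "a < N") (auto simp: merge_tuple_def extensional_def)
  qed
qed

lemma finite_tuples_on: "finite S \<Longrightarrow> finite (tuples_on S d)"
  unfolding tuples_on_def by (rule finite_PiE) auto

lemma sum_split_merge:
  assumes "K \<subseteq> {..<N}"
  shows "(\<Sum>x\<in>basis_tuples N d. f x) =
    (\<Sum>u\<in>tuples_on K d. \<Sum>v\<in>tuples_on ({..<N}-K) d. f (merge_tuple K u v))"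
proof -
  have "(\<Sum>u\<in>tuples_on K d. \<Sum>v\<in>tuples_on ({..<N}-K) d. f (merge_tuple K u v)) =
        (\<Sum>(u,v)\<in>tuples_on K d \<times> tuples_on ({..<N}-K) d. f (merge_tuple K u v))"
    by (rule sum.cartesian_product)
  also have "\<dots> = (\<Sum>x\<in>basis_tuples N d. f x)"
    using sum.reindex_bij_betw[OF bij_merge[OF assms], of f] by (simp add: case_prod_unfold)
  finally show ?thesis by simp
qed




lemma orth_full:
  assumes lb: "local_bases N d B" and j: "j \<in> multi_indices N d" and j': "j' \<in> multi_indices N d"
  shows "(\<Sum>x\<in>basis_tuples N d. \<Sum>y\<in>basis_tuples N d. cnj (prod_basis N d B j' x y) * prod_basis N d B j x y)
     = (if j = j' then 1 else 0)"
proof -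
  let ?T = "basis_tuples N d"
  have T: "?T = PiE {..<N} (\<lambda>a. {..<d a})" by (simp add: basis_tuples_def tuples_on_def)
  have "(\<Sum>x\<in>?T. \<Sum>y\<in>?T. cnj (prod_basis N d B j' x y) * prod_basis N d B j x y)
     = (\<Sum>x\<in>?T. \<Sum>y\<in>?T. \<Prod>a<N. cnj (B a (j' a) (x a) (y a)) * B a (j a) (x a) (y a))"
    by (intro sum.cong refl) (simp add: prod_basis_def prod.distrib cnj_prod)
  also have "\<dots> = (\<Sum>x\<in>?T. \<Prod>a<N. \<Sum>c<d a. cnj (B a (j' a) (x a) c) * B a (j a) (x a) c)"
    unfolding T by (intro sum.cong refl prod_sum_PiE[symmetric]) auto
  also have "\<dots> = (\<Prod>a<N. \<Sum>r<d a. \<Sum>c<d a. cnj (B a (j' a) r c) * B a (j a) r c)"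
    unfolding T by (rule prod_sum_PiE[symmetric]) auto
  also have "\<dots> = (\<Prod>a<N. if j a = j' a then 1 else 0)"
  proof (intro prod.cong refl)
    fix a assume a: "a \<in> {..<N}"
    have "j a < d a ^ 2" "j' a < d a ^ 2" using j j' a unfolding multi_indices_def by auto
    moreover have "\<forall>j<d a ^ 2. \<forall>j'<d a ^ 2.
        (\<Sum>r<d a. \<Sum>c<d a. cnj (B a j r c) * B a j' r c) = (if j = j' then 1 else 0)"
      using lb a unfolding local_bases_def by blast
    ultimately show "(\<Sum>r<d a. \<Sum>c<d a. cnj (B a (j' a) r c) * B a (j a) r c) = (if j a = j' a then 1 else 0)"
      by auto
  qed
  also have "\<dots> = (if j = j' then 1 else 0)"
  proof (cases "j = j'")
    case True then show ?thesis by simp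
  next
    case False
    then obtain a where "a < N" "j a \<noteq> j' a" using j j' unfolding multi_indices_def
      by (metis PiE_ext lessThan_iff)
    then show ?thesis using False by (auto intro!: prod_zero)
  qed
  finally show ?thesis .
qed




lemma prod_B0:
  assumes lb: "local_bases N d B" and C: "C \<subseteq> {..<N}"
    and v: "v \<in> tuples_on C d" and v': "v' \<in> tuples_on C d"
  shows "(\<Prod>a\<in>C. B a 0 (v a) (v' a)) =
    (if v = v' then (\<Prod>a\<in>C. 1 / complex_of_real (sqrt (real (d a)))) else 0)"
proof -
  have "(\<Prod>a\<in>C. B a 0 (v a) (v' a)) = (\<Prod>a\<in>C. if v a = v' a then 1 / complex_of_real (sqrt (real (d a))) else 0)"
  proof (intro prod.cong refl)
    fix a assume a: "a \<in> C"
    have "v a < d a" "v' a < d a" using v v' a unfolding tuples_on_def by auto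
    moreover have "a < N" using a C by auto
    ultimately show "B a 0 (v a) (v' a) = (if v a = v' a then 1 / complex_of_real (sqrt (real (d a))) else 0)"
      using lb unfolding local_bases_def by blast
  qed
  also have "\<dots> = (if v = v' then (\<Prod>a\<in>C. 1 / complex_of_real (sqrt (real (d a)))) else 0)"
  proof (cases "v = v'")
    case True then show ?thesis by simp
  next
    case False
    then obtain a where "a \<in> C" "v a \<noteq> v' a" using v v' unfolding tuples_on_def
      by (metis PiE_ext)
    moreover have "finite C" using C finite_subset by blast
    ultimately show ?thesis using False by (auto intro!: prod_zero)
  qed
  finally show ?thesis .
qed

lemma lemmaB:
  assumes lb: "local_bases N d B" and K: "K \<subseteq> {..<N}"
    and j: "j \<in> multi_indices N d" and j0: "\<forall>a<N. a \<notin> K \<longrightarrow> j a = 0"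
  shows "op_trace N d (op_mult N d (prod_basis N d B j) \<rho>) =
    (\<Prod>a\<in>{..<N}-K. 1 / complex_of_real (sqrt (real (d a)))) *
    (\<Sum>u\<in>tuples_on K d. \<Sum>u'\<in>tuples_on K d. (\<Prod>a\<in>K. B a (j a) (u a) (u' a)) * ptrace N d K \<rho> u' u)"
proof -
  let ?T = "basis_tuples N d"
  let ?TK = "tuples_on K d"
  let ?C = "{..<N}-K"
  let ?TC = "tuples_on ?C d"
  let ?c = "\<Prod>a\<in>?C. 1 / complex_of_real (sqrt (real (d a)))"
  let ?P = "\<lambda>u u'. \<Prod>a\<in>K. B a (j a) (u a) (u' a)"
  let ?m = "merge_tuple K"
  have fK: "finite ?TK" and fC: "finite ?TC" using K finite_subset
    by (auto intro!: finite_tuples_on)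
  have key: "(\<Prod>a<N. B a (j a) (?m u v a) (?m u' v' a)) = ?P u u' * (if v = v' then ?c else 0)"
    if "u \<in> ?TK" "u' \<in> ?TK" "v \<in> ?TC" "v' \<in> ?TC" for u u' v v'
  proof -
    have "(\<Prod>a<N. B a (j a) (?m u v a) (?m u' v' a)) =
      (\<Prod>a\<in>?C. B a (j a) (?m u v a) (?m u' v' a)) * (\<Prod>a\<in>K. B a (j a) (?m u v a) (?m u' v' a))"
      using K by (intro prod.subset_diff) auto
    also have "(\<Prod>a\<in>K. B a (j a) (?m u v a) (?m u' v' a)) = ?P u u'"
      by (intro prod.cong refl) (simp add: merge_tuple_def)
    also have "(\<Prod>a\<in>?C. B a (j a) (?m u v a) (?m u' v' a)) = (\<Prod>a\<in>?C. B a 0 (v a) (v' a))"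
      using j0 by (intro prod.cong refl) (simp add: merge_tuple_def)
    also have "\<dots> = (if v = v' then ?c else 0)"
      by (rule prod_B0[OF lb _ that(3,4)]) auto
    finally show ?thesis by simp
  qed
  have "op_trace N d (op_mult N d (prod_basis N d B j) \<rho>) =
      (\<Sum>x\<in>?T. \<Sum>z\<in>?T. (\<Prod>a<N. B a (j a) (x a) (z a)) * \<rho> z x)"
    unfolding op_trace_def op_mult_def by (intro sum.cong refl) (simp add: prod_basis_def)
  also have "\<dots> = (\<Sum>u\<in>?TK. \<Sum>v\<in>?TC. \<Sum>u'\<in>?TK. \<Sum>v'\<in>?TC.
      (\<Prod>a<N. B a (j a) (?m u v a) (?m u' v' a)) * \<rho> (?m u' v') (?m u v))"
    by (simp add: sum_split_merge[OF K])
  also have "\<dots> = (\<Sum>u\<in>?TK. \<Sum>v\<in>?TC. \<Sum>u'\<in>?TK. \<Sum>v'\<in>?TC.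
      (?P u u' * (if v = v' then ?c else 0)) * \<rho> (?m u' v') (?m u v))"
    by (intro sum.cong refl) (simp add: key)
  also have "\<dots> = (\<Sum>u\<in>?TK. \<Sum>v\<in>?TC. \<Sum>u'\<in>?TK. ?P u u' * ?c * \<rho> (?m u' v) (?m u v))"
  proof (intro sum.cong refl)
    fix u v u' assume "v \<in> ?TC"
    have "(\<Sum>v'\<in>?TC. (?P u u' * (if v = v' then ?c else 0)) * \<rho> (?m u' v') (?m u v)) =
       (\<Sum>v'\<in>?TC. if v = v' then ?P u u' * ?c * \<rho> (?m u' v') (?m u v) else 0)"
      by (intro sum.cong refl) simp
    also have "\<dots> = ?P u u' * ?c * \<rho> (?m u' v) (?m u v)"
      using fC \<open>v \<in> ?TC\<close> by (simp add: sum.delta)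
    finally show "(\<Sum>v'\<in>?TC. (?P u u' * (if v = v' then ?c else 0)) * \<rho> (?m u' v') (?m u v)) =
       ?P u u' * ?c * \<rho> (?m u' v) (?m u v)" .
  qed
  also have "\<dots> = (\<Sum>u\<in>?TK. \<Sum>u'\<in>?TK. \<Sum>v\<in>?TC. ?P u u' * ?c * \<rho> (?m u' v) (?m u v))"
    by (intro sum.cong refl sum.swap)
  also have "\<dots> = (\<Sum>u\<in>?TK. \<Sum>u'\<in>?TK. ?c * (?P u u' * ptrace N d K \<rho> u' u))"
  proof (intro sum.cong refl)
    fix u u' assume "u \<in> ?TK" "u' \<in> ?TK"
    then show "(\<Sum>v\<in>?TC. ?P u u' * ?c * \<rho> (?m u' v) (?m u v)) = ?c * (?P u u' * ptrace N d K \<rho> u' u)"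
      unfolding ptrace_def by (simp add: sum_distrib_left mult.assoc mult.left_commute)
  qed
  also have "\<dots> = ?c * (\<Sum>u\<in>?TK. \<Sum>u'\<in>?TK. ?P u u' * ptrace N d K \<rho> u' u)"
    by (simp add: sum_distrib_left)
  finally show ?thesis .
qed




lemma complete_K:
  assumes lb: "local_bases N d B" and K: "K \<subseteq> {..<N}"
    and u: "u \<in> tuples_on K d" and u': "u' \<in> tuples_on K d"
    and w: "w \<in> tuples_on K d" and w': "w' \<in> tuples_on K d"
  shows "(\<Sum>j\<in>PiE K (\<lambda>a. {..<d a ^ 2}). (\<Prod>a\<in>K. B a (j a) (u a) (u' a)) * cnj (\<Prod>a\<in>K. B a (j a) (w a) (w' a)))
    = (if u = w \<and> u' = w' then 1 else 0)"
proof -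
  have fK: "finite K" using K finite_subset by blast
  have "(\<Sum>j\<in>PiE K (\<lambda>a. {..<d a ^ 2}). (\<Prod>a\<in>K. B a (j a) (u a) (u' a)) * cnj (\<Prod>a\<in>K. B a (j a) (w a) (w' a)))
     = (\<Sum>j\<in>PiE K (\<lambda>a. {..<d a ^ 2}). \<Prod>a\<in>K. B a (j a) (u a) (u' a) * cnj (B a (j a) (w a) (w' a)))"
    by (intro sum.cong refl) (simp add: prod.distrib cnj_prod)
  also have "\<dots> = (\<Prod>a\<in>K. \<Sum>i<d a ^ 2. B a i (u a) (u' a) * cnj (B a i (w a) (w' a)))"
    by (rule prod_sum_PiE[symmetric]) (auto simp: fK)
  also have "\<dots> = (\<Prod>a\<in>K. if w a = u a \<and> w' a = u' a then 1 else 0)"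
  proof (intro prod.cong refl)
    fix a assume a: "a \<in> K"
    have aN: "a < N" using a K by auto
    have "\<forall>j<d a ^ 2. \<forall>j'<d a ^ 2.
        (\<Sum>r<d a. \<Sum>c<d a. cnj (B a j r c) * B a j' r c) = (if j = j' then 1 else 0)"
      using lb aN unfolding local_bases_def by blast
    moreover have "u a < d a" "u' a < d a" "w a < d a" "w' a < d a"
      using u u' w w' a unfolding tuples_on_def by auto
    ultimately show "(\<Sum>i<d a ^ 2. B a i (u a) (u' a) * cnj (B a i (w a) (w' a))) =
        (if w a = u a \<and> w' a = u' a then 1 else 0)"
      by (intro complete1) auto
  qed
  also have "\<dots> = (if u = w \<and> u' = w' then 1 else 0)"
  proof (cases "u = w \<and> u' = w'")
    case True then show ?thesis by simp
  next
    case False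
    then obtain a where "a \<in> K" "\<not> (w a = u a \<and> w' a = u' a)" using u u' w w' unfolding tuples_on_def
      by (metis PiE_ext)
    then show ?thesis using False fK by (auto intro!: prod_zero)
  qed
  finally show ?thesis .
qed




lemma finite_multi: "finite (multi_indices N d)"
  unfolding multi_indices_def by (rule finite_PiE) auto

lemma coef_eq:
  assumes lb: "local_bases N d B" and eq: "Phi_N N d B NS \<sigma> = Phi_N N d B NS \<rho>"
    and j': "j' \<in> nbhd_indices N d NS"
  shows "op_trace N d (op_mult N d (prod_basis N d B j') \<sigma>) = op_trace N d (op_mult N d (prod_basis N d B j') \<rho>)"
proof -
  let ?J = "nbhd_indices N d NS"
  let ?T = "basis_tuples N d"
  let ?X = "prod_basis N d B"
  let ?D = "\<lambda>j. op_trace N d (op_mult N d (?X j) \<sigma>) - op_trace N d (op_mult N d (?X j) \<rho>)"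
  have fJ: "finite ?J" using finite_multi[of N d] unfolding nbhd_indices_def
    by (rule finite_subset[rotated]) auto
  have Jm: "?J \<subseteq> multi_indices N d" unfolding nbhd_indices_def by auto
  have h: "(\<Sum>j\<in>?J. ?D j * ?X j x y) = 0" for x y
  proof -
    have "Phi_N N d B NS \<sigma> x y = Phi_N N d B NS \<rho> x y" using eq by simp
    thus ?thesis unfolding Phi_N_def Phi_X_def
      by (simp add: left_diff_distrib sum_subtractf)
  qed
  have "0 = (\<Sum>x\<in>?T. \<Sum>y\<in>?T. cnj (?X j' x y) * (\<Sum>j\<in>?J. ?D j * ?X j x y))"
    by (simp add: h)
  also have "\<dots> = (\<Sum>x\<in>?T. \<Sum>y\<in>?T. \<Sum>j\<in>?J. ?D j * (cnj (?X j' x y) * ?X j x y))"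
    by (simp add: sum_distrib_left mult.left_commute)
  also have "\<dots> = (\<Sum>j\<in>?J. \<Sum>x\<in>?T. \<Sum>y\<in>?T. ?D j * (cnj (?X j' x y) * ?X j x y))"
    by (simp add: sum.swap[where A = ?J])
  also have "\<dots> = (\<Sum>j\<in>?J. ?D j * (\<Sum>x\<in>?T. \<Sum>y\<in>?T. cnj (?X j' x y) * ?X j x y))"
    by (simp add: sum_distrib_left)
  also have "\<dots> = (\<Sum>j\<in>?J. ?D j * (if j = j' then 1 else 0))"
    using Jm j' by (intro sum.cong refl) (simp add: orth_full[OF lb] subset_iff)
  also have "\<dots> = ?D j'" using fJ j' by (simp add: sum.delta' if_distrib cong: if_cong)
  finally show ?thesis by simp
qed




lemma c_nonzero:
  fixes N :: nat and d :: "nat \<Rightarrow> nat"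
  assumes "\<forall>a<N. d a \<ge> 1"
  shows "(\<Prod>a\<in>{..<N}-K. 1 / complex_of_real (sqrt (real (d a)))) \<noteq> 0"
proof -
  have "1 / complex_of_real (sqrt (real (d a))) \<noteq> 0" if "a \<in> {..<N}-K" for a
    using assms that by auto
  moreover have "finite ({..<N}-K)" by (rule finite_Diff) simp
  ultimately show ?thesis by (simp add: prod_zero_iff)
qed

theorem corollaryV1:
  fixes N :: nat and d :: "nat \<Rightarrow> nat" and NS :: "nat set set"
    and B :: "nat \<Rightarrow> nat \<Rightarrow> nat \<Rightarrow> nat \<Rightarrow> complex" and \<rho> \<sigma> :: op
  assumes "\<forall>a<N. d a \<ge> 1"
    and "nontrivial_neighborhood_structure N NS"
    and "local_bases N d B"
    and "density_op N d \<rho>" and "density_op N d \<sigma>"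
  shows "(\<forall>K\<in>NS. ptrace N d K \<rho> = ptrace N d K \<sigma>) \<longleftrightarrow> Phi_N N d B NS \<sigma> = Phi_N N d B NS \<rho>"
proof
  note d1 = assms(1) and lb = assms(3)
  have NSsub: "K \<subseteq> {..<N}" if "K \<in> NS" for K
    using assms(2) that unfolding nontrivial_neighborhood_structure_def by blast
  let ?coef = "\<lambda>M j. op_trace N d (op_mult N d (prod_basis N d B j) M)"
  {
    assume H: "\<forall>K\<in>NS. ptrace N d K \<rho> = ptrace N d K \<sigma>"
    have ce: "?coef \<sigma> j = ?coef \<rho> j" if j: "j \<in> nbhd_indices N d NS" for j
    proof -
      from j obtain K where K: "K \<in> NS" and jm: "j \<in> multi_indices N d"
        and j0: "\<forall>a<N. a \<notin> K \<longrightarrow> j a = 0"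
        unfolding nbhd_indices_def by blast
      show ?thesis using lemmaB[OF lb NSsub[OF K] jm j0] H K by simp
    qed
    show "Phi_N N d B NS \<sigma> = Phi_N N d B NS \<rho>"
      unfolding Phi_N_def Phi_X_def by (intro ext sum.cong refl) (simp add: ce)
  }
  {
    assume eq: "Phi_N N d B NS \<sigma> = Phi_N N d B NS \<rho>"
    show "\<forall>K\<in>NS. ptrace N d K \<rho> = ptrace N d K \<sigma>"
    proof
      fix K assume K: "K \<in> NS"
      have KN: "K \<subseteq> {..<N}" using NSsub[OF K] .
      let ?TK = "tuples_on K d"
      let ?P = "\<lambda>j u u'. \<Prod>a\<in>K. B a (j a) (u a) (u' a)"
      let ?E = "\<lambda>u' u. ptrace N d K \<rho> u' u - ptrace N d K \<sigma> u' u"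
      let ?c = "\<Prod>a\<in>{..<N}-K. 1 / complex_of_real (sqrt (real (d a)))"
      have fK: "finite ?TK" using KN finite_subset by (auto intro!: finite_tuples_on)
      have zero: "(\<Sum>u\<in>?TK. \<Sum>u'\<in>?TK. ?P j u u' * ?E u' u) = 0"
        if j: "j \<in> PiE K (\<lambda>a. {..<d a ^ 2})" for j
      proof -
        define j' where "j' = (\<lambda>a. if a \<in> K then j a else if a < N then 0 else undefined)"
        have j'm: "j' \<in> multi_indices N d"
          using j KN d1 unfolding multi_indices_def j'_def by (auto simp: PiE_iff extensional_def)
        have j'0: "\<forall>a<N. a \<notin> K \<longrightarrow> j' a = 0" unfolding j'_def by auto
        have j'n: "j' \<in> nbhd_indices N d NS" unfolding nbhd_indices_def using j'm j'0 K by blast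
        have Pj: "?P j' u u' = ?P j u u'" for u u' unfolding j'_def by (intro prod.cong refl) auto
        have "?c * (\<Sum>u\<in>?TK. \<Sum>u'\<in>?TK. ?P j u u' * ptrace N d K \<sigma> u' u) =
              ?c * (\<Sum>u\<in>?TK. \<Sum>u'\<in>?TK. ?P j u u' * ptrace N d K \<rho> u' u)"
          using coef_eq[OF lb eq j'n] lemmaB[OF lb KN j'm j'0, of \<sigma>] lemmaB[OF lb KN j'm j'0, of \<rho>]
          by (simp add: Pj)
        hence "(\<Sum>u\<in>?TK. \<Sum>u'\<in>?TK. ?P j u u' * ptrace N d K \<sigma> u' u) =
              (\<Sum>u\<in>?TK. \<Sum>u'\<in>?TK. ?P j u u' * ptrace N d K \<rho> u' u)"
          using c_nonzero[OF d1, of K] by simp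
        thus ?thesis by (simp add: right_diff_distrib sum_subtractf)
      qed
      show "ptrace N d K \<rho> = ptrace N d K \<sigma>"
      proof (intro ext)
        fix y1 y2
        show "ptrace N d K \<rho> y1 y2 = ptrace N d K \<sigma> y1 y2"
        proof (cases "y1 \<in> ?TK \<and> y2 \<in> ?TK")
          case False then show ?thesis unfolding ptrace_def by auto
        next
          case True
          let ?JK = "PiE K (\<lambda>a. {..<d a ^ 2})"
          have fJ: "finite ?JK" using KN finite_subset by (auto intro!: finite_PiE)
          have "?E y1 y2 = (\<Sum>u\<in>?TK. \<Sum>u'\<in>?TK. ?E u' u * (if u = y2 \<and> u' = y1 then 1 else 0))"
          proof -
            have "(\<Sum>u\<in>?TK. \<Sum>u'\<in>?TK. ?E u' u * (if u = y2 \<and> u' = y1 then 1 else 0)) =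
                  (\<Sum>u\<in>?TK. if u = y2 then ?E y1 u else 0)"
            proof (intro sum.cong refl)
              fix u assume "u \<in> ?TK"
              have "(\<Sum>u'\<in>?TK. ?E u' u * (if u = y2 \<and> u' = y1 then 1 else 0)) =
                    (\<Sum>u'\<in>?TK. if u' = y1 then (if u = y2 then ?E u' u else 0) else 0)"
                by (intro sum.cong refl) auto
              also have "\<dots> = (if u = y2 then ?E y1 u else 0)" using True fK by (simp add: sum.delta')
              finally show "(\<Sum>u'\<in>?TK. ?E u' u * (if u = y2 \<and> u' = y1 then 1 else 0)) =
                    (if u = y2 then ?E y1 u else 0)" .
            qed
            also have "\<dots> = ?E y1 y2" using True fK by (simp add: sum.delta')
            finally show ?thesis by simp
          qed
          also have "\<dots> = (\<Sum>u\<in>?TK. \<Sum>u'\<in>?TK. ?E u' u *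
              (\<Sum>j\<in>?JK. ?P j u u' * cnj (?P j y2 y1)))"
          proof (intro sum.cong refl)
            fix u u' assume u: "u \<in> ?TK" and u': "u' \<in> ?TK"
            have y: "y1 \<in> ?TK" "y2 \<in> ?TK" using True by auto
            show "?E u' u * (if u = y2 \<and> u' = y1 then 1 else 0) = ?E u' u * (\<Sum>j\<in>?JK. ?P j u u' * cnj (?P j y2 y1))"
              by (simp only: complete_K[OF lb KN u u' y(2) y(1)])
          qed
          also have "\<dots> = (\<Sum>u\<in>?TK. \<Sum>u'\<in>?TK. \<Sum>j\<in>?JK. cnj (?P j y2 y1) * (?P j u u' * ?E u' u))"
            by (simp add: sum_distrib_left mult_ac)
          also have "\<dots> = (\<Sum>j\<in>?JK. \<Sum>u\<in>?TK. \<Sum>u'\<in>?TK. cnj (?P j y2 y1) * (?P j u u' * ?E u' u))"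
            by (simp add: sum.swap[where A = ?JK])
          also have "\<dots> = (\<Sum>j\<in>?JK. cnj (?P j y2 y1) * (\<Sum>u\<in>?TK. \<Sum>u'\<in>?TK. ?P j u u' * ?E u' u))"
            by (simp add: sum_distrib_left)
          also have "\<dots> = 0" by (simp add: zero)
          finally show ?thesis by simp
        qed
      qed
    qed
  }
qed


end
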